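(* Let $n\ge 3$ and let $P(G(n))$ be the power graph of the gyrogroup $G(n)$ (defined in the context), with identity $e=0$. Then: (1) the detour eccentricity satisfies $ec_D(u)=2^{n-1}$ if $u\in P(n)\setminus\{e\}$, $ec_D(e)=2^{n-1}-1$, and $ec_D(u)=2^{n-1}$ if $u\in H(n)$; (2) $rad_D(P(G(n)))=2^{n-1}-1$; (3) $dia_D(P(G(n)))=2^{n-1}$.
   Context: Let $n\ge 3$ be an integer and $m=2^{n-1}$. Let $P(n)=\{0,1,\dots,m-1\}$, $H(n)=\{m,m+1,\dots,2^n-1\}$ and $G(n)=P(n)\cup H(n)$. For $i,j\in G(n)$ let $t,s,k\in P(n)$ be the residues modulo $m$ (taken in $\{0,\dots,m-1\}$) of $i+j$, $i+(\frac m2-1)j$ and $(\frac m2+1)i+(\frac m2-1)j$, respectively, and define $i\oplus j=t$ if $i,j\in P(n)$; $i\oplus j=t+m$ if $i\in P(n),j\in H(n)$; $i\oplus j=s+m$ if $i\in H(n),j\in P(n)$; $i\oplus j=k$ if $i,j\in H(n)$. Then $(G(n),\oplus)$ is a gyrogroup with identity $e=0$. Powers are defined by $a^1=a$, $a^{k+1}=a^k\oplus a$. The power graph $P(G(n))$ is the simple undirected graph with vertex set $G(n)$ in which distinct vertices $u,v$ are adjacent if and only if $u^k=v$ or $v^k=u$ for some positive integer $k$. In a connected graph, the detour distance $d_D(u,v)$ is the length of a longest $u$–$v$ path; the detour eccentricity $ec_D(u)$ is $\max_v d_D(u,v)$; the detour radius $rad_D$ and detour diameter $dia_D$ are the minimum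 and maximum detour eccentricities over all vertices. *)

theory Defs
  imports Main
begin

definition gm :: "nat \<Rightarrow> nat" where
  "gm n = 2 ^ (n - 1)"

definition Pn :: "nat \<Rightarrow> nat set" where
  "Pn n = {0..<gm n}"

definition Hn :: "nat \<Rightarrow> nat set" where
  "Hn n = {gm n..<2 ^ n}"

definition Gn :: "nat \<Rightarrow> nat set" where
  "Gn n = Pn n \<union> Hn n"

definition gop :: "nat \<Rightarrow> nat \<Rightarrow> nat \<Rightarrow> nat" where
  "gop n i j =
     (let m = gm n;
          t = (i + j) mod m;
          s = (i + (m div 2 - 1) * j) mod m;
          k = ((m div 2 + 1) * i + (m div 2 - 1) * j) mod m
      in if i \<in> Pn n \<and> j \<in> Pn n then t
         else if i \<in> Pn n \<and> j \<in> Hn n then t + m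
         else if i \<in> Hn n \<and> j \<in> Pn n then s + m
         else k)"

text \<open>Powers: a^1 = a, a^(k+1) = a^k \<oplus> a (the value at 0 is irrelevant; only positive powers are used).\<close>
fun gpow :: "nat \<Rightarrow> nat \<Rightarrow> nat \<Rightarrow> nat" where
  "gpow n a 0 = 0"
| "gpow n a (Suc 0) = a"
| "gpow n a (Suc (Suc k)) = gop n (gpow n a (Suc k)) a"

definition padj :: "nat \<Rightarrow> nat \<Rightarrow> nat \<Rightarrow> bool" where
  "padj n u v \<longleftrightarrow> u \<in> Gn n \<and> v \<in> Gn n \<and> u \<noteq> v \<and>
     ((\<exists>k>0. gpow n u k = v) \<or> (\<exists>k>0. gpow n v k = u))"

definition ppath :: "nat \<Rightarrow> nat \<Rightarrow> nat \<Rightarrow> nat list \<Rightarrow> bool" where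
  "ppath n u v p \<longleftrightarrow> p \<noteq> [] \<and> hd p = u \<and> last p = v \<and> distinct p \<and>
     set p \<subseteq> Gn n \<and> (\<forall>i. Suc i < length p \<longrightarrow> padj n (p ! i) (p ! Suc i))"

definition detour_dist :: "nat \<Rightarrow> nat \<Rightarrow> nat \<Rightarrow> nat" where
  "detour_dist n u v = Max {length p - 1 | p. ppath n u v p}"

definition detour_ecc :: "nat \<Rightarrow> nat \<Rightarrow> nat" where
  "detour_ecc n u = Max ((\<lambda>v. detour_dist n u v) ` Gn n)"

definition detour_rad :: "nat \<Rightarrow> nat" where
  "detour_rad n = Min ((\<lambda>u. detour_ecc n u) ` Gn n)"

definition detour_dia :: "nat \<Rightarrow> nat" where
  "detour_dia n = Max ((\<lambda>u. detour_ecc n u) ` Gn n)"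

end

theory Submission imports Defs "HOL-Number_Theory.Number_Theory"
begin

lemma gm_ge: "n \<ge> 3 \<Longrightarrow> gm n \<ge> 4"
proof -
  assume "n \<ge> 3"
  then have "(2::nat)^2 \<le> 2^(n-1)" by (intro power_increasing) auto
  then show ?thesis by (simp add: gm_def)
qed

lemma gm_even: "n \<ge> 3 \<Longrightarrow> even (gm n)"
  unfolding gm_def by (cases "n - 1") auto

lemma two_pow_n: "n \<ge> 3 \<Longrightarrow> (2::nat)^n = 2 * gm n"
  unfolding gm_def by (cases n) auto

lemma gop_PP: "a \<in> Pn n \<Longrightarrow> b \<in> Pn n \<Longrightarrow> gop n a b = (a + b) mod gm n"
  unfolding gop_def Let_def by simp

lemma PH_disj: "a \<in> Hn n \<Longrightarrow> a \<notin> Pn n"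
  unfolding Pn_def Hn_def by auto

lemma gop_HH: "n \<ge> 3 \<Longrightarrow> a \<in> Hn n \<Longrightarrow> gop n a a = 0"
proof -
  assume n: "n \<ge> 3" and a: "a \<in> Hn n"
  obtain k where k: "gm n = 2 * k" using gm_even[OF n] by blast
  have "k \<ge> 2" using gm_ge[OF n] k by simp
  then have "(k + 1) * a + (k - 1) * a = (2 * k) * a"
    by (cases k) (auto simp: algebra_simps)
  then have "(gm n div 2 + 1) * a + (gm n div 2 - 1) * a = gm n * a" using k by simp
  then show ?thesis using PH_disj[OF a] unfolding gop_def Let_def by simp
qed


lemma gm_pos: "n \<ge> 3 \<Longrightarrow> gm n > 0" using gm_ge[of n] by simp

lemma H_mod: "n \<ge> 3 \<Longrightarrow> a \<in> Hn n \<Longrightarrow> a mod gm n + gm n = a"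
proof -
  assume n: "n \<ge> 3" and a: "a \<in> Hn n"
  then have a1: "gm n \<le> a" and a2: "a < 2 * gm n" by (auto simp: Hn_def two_pow_n)
  then have "a mod gm n = (a - gm n) mod gm n" by (simp add: le_mod_geq)
  also have "\<dots> = a - gm n" using a1 a2 by simp
  finally show ?thesis using a1 by simp
qed

lemma zero_P: "n \<ge> 3 \<Longrightarrow> 0 \<in> Pn n" using gm_pos[of n] by (simp add: Pn_def)

lemma gop_0H: "n \<ge> 3 \<Longrightarrow> a \<in> Hn n \<Longrightarrow> gop n 0 a = a"
  using H_mod[of n a] zero_P[of n] PH_disj[of a n] unfolding gop_def Let_def by simp

lemma mod_P: "n \<ge> 3 \<Longrightarrow> x mod gm n \<in> Pn n"
  using gm_pos[of n] by (simp add: Pn_def)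

lemma gpow_P: "n \<ge> 3 \<Longrightarrow> a \<in> Pn n \<Longrightarrow> gpow n a (Suc k) = (Suc k * a) mod gm n"
proof (induction k)
  case 0
  then show ?case by (simp add: Pn_def)
next
  case (Suc k)
  have "gpow n a (Suc (Suc k)) = gop n ((Suc k * a) mod gm n) a" using Suc by simp
  also have "\<dots> = ((Suc k * a) mod gm n + a) mod gm n" using Suc mod_P by (simp add: gop_PP)
  also have "\<dots> = (Suc k * a + a) mod gm n" by (simp only: mod_add_left_eq)
  also have "\<dots> = (Suc (Suc k) * a) mod gm n" by (simp add: algebra_simps)
  finally show ?case .
qed

lemma gpow_H: "n \<ge> 3 \<Longrightarrow> a \<in> Hn n \<Longrightarrow> gpow n a (Suc k) = (if even k then a else 0)"
proof (induction k)
  case 0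
  then show ?case by simp
next
  case (Suc k)
  then show ?case by (auto simp: gop_HH gop_0H)
qed

lemma gpow_P_in: "n \<ge> 3 \<Longrightarrow> a \<in> Pn n \<Longrightarrow> k > 0 \<Longrightarrow> gpow n a k \<in> Pn n"
  by (cases k) (auto simp: gpow_P mod_P)

lemma gpow_H_in: "n \<ge> 3 \<Longrightarrow> a \<in> Hn n \<Longrightarrow> k > 0 \<Longrightarrow> gpow n a k = a \<or> gpow n a k = 0"
  by (cases k) (auto simp: gpow_H)

lemma reach:
  assumes n: "n \<ge> 3" and u: "u \<in> Pn n" and v: "v \<in> Pn n" and d: "gcd u (gm n) dvd v"
  shows "\<exists>k>0. gpow n u k = v"
proof -
  obtain x where x: "[u * x = gcd u (gm n)] (mod gm n)" using cong_solve_nat by blast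
  obtain t where t: "v = gcd u (gm n) * t" using d by blast
  define k where "k = x * t + gm n"
  have kp: "k > 0" using gm_pos[OF n] by (simp add: k_def)
  have "(k * u) mod gm n = ((u * x) * t + gm n * u) mod gm n" by (simp add: k_def algebra_simps)
  also have "\<dots> = ((u * x) * t) mod gm n" by simp
  also have "\<dots> = (((u * x) mod gm n) * t) mod gm n" by (simp add: mod_mult_left_eq)
  also have "\<dots> = ((gcd u (gm n) mod gm n) * t) mod gm n" using x by (simp add: cong_def)
  also have "\<dots> = v mod gm n" by (simp add: mod_mult_left_eq t)
  also have "\<dots> = v" using v by (simp add: Pn_def)
  finally have "(k * u) mod gm n = v" .
  moreover have "gpow n u k = (k * u) mod gm n" using kp gpow_P[OF n u, of "k - 1"] by simp
  ultimately show ?thesis using kp by auto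
qed

lemma gcd_pow: "\<exists>i. gcd u (gm n) = 2 ^ i"
proof -
  have "gcd u (gm n) dvd 2 ^ (n - 1)" by (simp add: gm_def)
  then show ?thesis using divides_primepow_nat[of 2] by auto
qed

lemma complete:
  assumes n: "n \<ge> 3" and u: "u \<in> Pn n" and v: "v \<in> Pn n"
  shows "(\<exists>k>0. gpow n u k = v) \<or> (\<exists>k>0. gpow n v k = u)"
proof -
  obtain i where i: "gcd u (gm n) = 2 ^ i" using gcd_pow by blast
  obtain j where j: "gcd v (gm n) = 2 ^ j" using gcd_pow by blast
  show ?thesis
  proof (cases "i \<le> j")
    case True
    then have "gcd u (gm n) dvd gcd v (gm n)" using i j by (simp add: le_imp_power_dvd)
    then have "gcd u (gm n) dvd v" using dvd_trans gcd_dvd1 by blast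
    then show ?thesis using reach[OF n u v] by blast
  next
    case False
    then have "gcd v (gm n) dvd gcd u (gm n)" using i j by (simp add: le_imp_power_dvd)
    then have "gcd v (gm n) dvd u" using dvd_trans gcd_dvd1 by blast
    then show ?thesis using reach[OF n v u] by blast
  qed
qed

lemma padj_iff:
  assumes n: "n \<ge> 3"
  shows "padj n u v \<longleftrightarrow> u \<in> Gn n \<and> v \<in> Gn n \<and> u \<noteq> v \<and>
     ((u \<in> Pn n \<and> v \<in> Pn n) \<or> (u = 0 \<and> v \<in> Hn n) \<or> (u \<in> Hn n \<and> v = 0))"
proof
  assume a: "padj n u v"
  then have g: "u \<in> Gn n" "v \<in> Gn n" "u \<noteq> v" by (auto simp: padj_def)
  have "(u \<in> Pn n \<and> v \<in> Pn n) \<or> (u = 0 \<and> v \<in> Hn n) \<or> (u \<in> Hn n \<and> v = 0)"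
  proof (cases "u \<in> Pn n")
    case uP: True
    show ?thesis
    proof (cases "v \<in> Pn n")
      case True then show ?thesis using uP by simp
    next
      case False
      then have vH: "v \<in> Hn n" using g by (auto simp: Gn_def)
      from a obtain k where k: "k > 0" "gpow n u k = v \<or> gpow n v k = u" by (auto simp: padj_def)
      have "gpow n u k \<noteq> v" using gpow_P_in[OF n uP k(1)] False by auto
      then have "gpow n v k = u" using k by blast
      then have "u = 0" using gpow_H_in[OF n vH k(1)] g(3) by auto
      then show ?thesis using vH by simp
    qed
  next
    case False
    then have uH: "u \<in> Hn n" using g by (auto simp: Gn_def)
    from a obtain k where k: "k > 0" "gpow n u k = v \<or> gpow n v k = u" by (auto simp: padj_def)
    show ?thesis
    proof (cases "v \<in> Pn n")
      case True
      have "gpow n v k \<noteq> u" using gpow_P_in[OF n True k(1)] False by auto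
      then have "gpow n u k = v" using k by blast
      then have "v = 0" using gpow_H_in[OF n uH k(1)] g(3) by auto
      then show ?thesis using uH by simp
    next
      case vP: False
      then have vH: "v \<in> Hn n" using g by (auto simp: Gn_def)
      have "0 \<noteq> u" using zero_P[OF n] PH_disj[OF uH] by (cases "u = 0") auto
      have "0 \<noteq> v" using zero_P[OF n] PH_disj[OF vH] by (cases "v = 0") auto
      with \<open>0 \<noteq> u\<close> have False using k gpow_H_in[OF n uH k(1)] gpow_H_in[OF n vH k(1)] g(3) by auto
      then show ?thesis ..
    qed
  qed
  then show "u \<in> Gn n \<and> v \<in> Gn n \<and> u \<noteq> v \<and>
     ((u \<in> Pn n \<and> v \<in> Pn n) \<or> (u = 0 \<and> v \<in> Hn n) \<or> (u \<in> Hn n \<and> v = 0))" using g by simp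
next
  assume a: "u \<in> Gn n \<and> v \<in> Gn n \<and> u \<noteq> v \<and>
     ((u \<in> Pn n \<and> v \<in> Pn n) \<or> (u = 0 \<and> v \<in> Hn n) \<or> (u \<in> Hn n \<and> v = 0))"
  have g2: "gpow n w 2 = 0" if "w \<in> Hn n" for w
    using gpow_H[OF n that, of 1] by (simp add: numeral_2_eq_2)
  have two: "(2::nat) > 0" by simp
  show "padj n u v"
    using a complete[OF n, of u v] g2[of u] g2[of v] two unfolding padj_def
    by blast
qed


lemma succ_nth: "successively R p \<longleftrightarrow> (\<forall>i. Suc i < length p \<longrightarrow> R (p!i) (p!Suc i))"
proof (induction R p rule: successively.induct)
  case (3 P x y xs)
  show ?case
  proof
    assume "successively P (x # y # xs)"
    then show "\<forall>i. Suc i < length (x # y # xs) \<longrightarrow> P ((x # y # xs) ! i) ((x # y # xs) ! Suc i)"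
      using 3 by (auto simp: nth_Cons split: nat.split)
  next
    assume h: "\<forall>i. Suc i < length (x # y # xs) \<longrightarrow> P ((x # y # xs) ! i) ((x # y # xs) ! Suc i)"
    have "P x y" using h[rule_format, of 0] by simp
    moreover have "\<forall>i. Suc i < length (y # xs) \<longrightarrow> P ((y # xs) ! i) ((y # xs) ! Suc i)"
      using h by (metis Suc_less_eq length_Cons nth_Cons_Suc)
    ultimately show "successively P (x # y # xs)" using 3 by simp
  qed
qed auto

lemma ppath_iff: "ppath n u v p \<longleftrightarrow> p \<noteq> [] \<and> hd p = u \<and> last p = v \<and> distinct p \<and>
     set p \<subseteq> Gn n \<and> successively (padj n) p"
  unfolding ppath_def succ_nth by simp

lemma P_adj: "n \<ge> 3 \<Longrightarrow> x \<in> Pn n \<Longrightarrow> y \<in> Pn n \<Longrightarrow> x \<noteq> y \<Longrightarrow> padj n x y"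
  by (simp add: padj_iff Gn_def)

lemma succ_P: "n \<ge> 3 \<Longrightarrow> distinct p \<Longrightarrow> set p \<subseteq> Pn n \<Longrightarrow> successively (padj n) p"
proof (induction p)
  case (Cons x xs)
  then show ?case
    by (cases xs) (auto simp: successively_Cons intro!: P_adj)
qed auto


lemma adjH1: "n \<ge> 3 \<Longrightarrow> padj n x y \<Longrightarrow> x \<in> Hn n \<Longrightarrow> y = 0"
  using PH_disj[of 0 n] PH_disj[of x n] zero_P[of n] by (auto simp: padj_iff)
lemma adjH2: "n \<ge> 3 \<Longrightarrow> padj n x y \<Longrightarrow> y \<in> Hn n \<Longrightarrow> x = 0"
  using PH_disj[of 0 n] PH_disj[of y n] zero_P[of n] by (auto simp: padj_iff)

lemma path_bound:
  assumes n: "n \<ge> 3" and p: "ppath n u v p"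
  shows "length p \<le> gm n + 1" and "u = 0 \<Longrightarrow> length p \<le> gm n"
proof -
  let ?L = "length p"
  have dist: "distinct p" and adj: "\<And>i. Suc i < ?L \<Longrightarrow> padj n (p!i) (p!Suc i)"
    and sub: "set p \<subseteq> Gn n" and hd: "hd p = u" and ne: "p \<noteq> []"
    using p by (auto simp: ppath_def)
  have inj: "i = j" if "i < ?L" "j < ?L" "p!i = p!j" for i j
    using dist that nth_eq_iff_index_eq by blast
  define I where "I = {i. i < ?L \<and> p!i \<in> Hn n}"
  have A: "p!(i-1) = 0" if "i \<in> I" "i > 0" for i
    using adjH2[OF n adj[of "i-1"]] that by (auto simp: I_def)
  have B: "p!(Suc i) = 0" if "i \<in> I" "Suc i < ?L" for i
    using adjH1[OF n adj[of i]] that by (auto simp: I_def)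
  have finI: "finite I" by (simp add: I_def)
  have cardH: "card (set p \<inter> Hn n) \<le> card I"
  proof -
    have "set p \<inter> Hn n \<subseteq> (\<lambda>i. p!i) ` I" by (auto simp: I_def in_set_conv_nth)
    then show ?thesis using finI by (meson card_image_le card_mono finite_imageI le_trans)
  qed
  have cardP: "card (set p \<inter> Pn n) \<le> gm n"
  proof -
    have "card (set p \<inter> Pn n) \<le> card (Pn n)" by (rule card_mono) (auto simp: Pn_def)
    then show ?thesis by (simp add: Pn_def)
  qed
  have Lc: "?L \<le> gm n + card I"
  proof -
    have "?L = card (set p)" using dist by (simp add: distinct_card)
    also have "set p = (set p \<inter> Pn n) \<union> (set p \<inter> Hn n)" using sub by (auto simp: Gn_def)
    also have "card \<dots> \<le> card (set p \<inter> Pn n) + card (set p \<inter> Hn n)" by (rule card_Un_le)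
    finally show ?thesis using cardH cardP by linarith
  qed
  have m4: "gm n \<ge> 4" using gm_ge[OF n] .
  show "?L \<le> gm n + 1"
  proof (cases "?L \<le> 3")
    case True then show ?thesis using m4 by linarith
  next
    case False
    have "card I \<le> Suc 0"
    proof (subst card_le_Suc0_iff_eq[OF finI], intro ballI)
      fix i1 i2 assume i1: "i1 \<in> I" and i2: "i2 \<in> I"
      show "i1 = i2"
      proof (rule ccontr)
        assume ne12: "i1 \<noteq> i2"
        have key: False if a: "a \<in> I" "b \<in> I" "a < b" for a b
        proof -
          have bL: "b < ?L" using a by (auto simp: I_def)
          have "a = 0"
          proof (rule ccontr)
            assume "a \<noteq> 0"
            then have "p!(a-1) = 0" "p!(Suc a) = 0" using A B a bL by auto
            moreover have "Suc a < ?L" using a bL by linarith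
            moreover have "a - 1 < ?L" using a bL by linarith
            ultimately have "a - 1 = Suc a" using inj[of "a-1" "Suc a"] by auto
            then show False by arith
          qed
          have "Suc b = ?L"
          proof (rule ccontr)
            assume "Suc b \<noteq> ?L"
            then have "p!(b-1) = 0" "p!(Suc b) = 0" using A B a bL by auto
            moreover have "Suc b < ?L" "b - 1 < ?L" using bL \<open>Suc b \<noteq> ?L\<close> by auto
            ultimately have "b - 1 = Suc b" using inj[of "b-1" "Suc b"] by auto
            then show False by arith
          qed
          have "p!(Suc 0) = 0" using B[of 0] a \<open>a = 0\<close> bL by auto
          moreover have "p!(b-1) = 0" using A[of b] a \<open>a = 0\<close> by auto
          ultimately have "b - 1 = Suc 0" using inj[of "b-1" "Suc 0"] bL a \<open>a = 0\<close> by auto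
          then show False using False \<open>Suc b = ?L\<close> by auto
        qed
        show False using ne12 key[OF i1 i2] key[OF i2 i1] by linarith
      qed
    qed
    then show ?thesis using Lc by linarith
  qed
  assume u0: "u = 0"
  have p0: "p!0 = 0" using hd ne u0 by (simp add: hd_conv_nth)
  show "?L \<le> gm n"
  proof (cases "?L \<le> 2")
    case True then show ?thesis using m4 by linarith
  next
    case False
    have "I = {}"
    proof (rule ccontr)
      assume "I \<noteq> {}"
      then obtain i where i: "i \<in> I" by blast
      have "i \<noteq> 0" using i p0 PH_disj[of 0 n] zero_P[OF n] by (cases i) (auto simp: I_def)
      then have "p!(i-1) = 0" using A i by auto
      moreover have "i - 1 < ?L" "0 < ?L" using i ne by (auto simp: I_def)
      ultimately have "i - 1 = 0" using inj[of "i-1" 0] p0 by auto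
      then have "i = 1" using \<open>i \<noteq> 0\<close> by simp
      then have "p!2 = 0" using B[of 1] i False by (simp add: numeral_2_eq_2)
      then show False using inj[of 2 0] p0 False ne by auto
    qed
    then show ?thesis using Lc by simp
  qed
qed


lemma adj0: "n \<ge> 3 \<Longrightarrow> v \<in> Gn n \<Longrightarrow> v \<noteq> 0 \<Longrightarrow> padj n 0 v \<and> padj n v 0"
  using zero_P[of n] by (auto simp: padj_iff Gn_def)

lemma path_exists:
  assumes n: "n \<ge> 3" and u: "u \<in> Gn n" and v: "v \<in> Gn n"
  shows "\<exists>p. ppath n u v p"
proof (cases "u = v")
  case True
  then show ?thesis using u by (intro exI[of _ "[u]"]) (simp add: ppath_def)
next
  case neq: False
  show ?thesis
  proof (cases "padj n u v")
    case True
    then show ?thesis using u v neq by (intro exI[of _ "[u, v]"]) (simp add: ppath_iff)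
  next
    case False
    have "u \<noteq> 0" using False adj0[OF n v] neq by (cases "u = 0") auto
    moreover have "v \<noteq> 0" using False adj0[OF n u] neq by (cases "v = 0") auto
    moreover have "0 \<in> Gn n" using zero_P[OF n] by (simp add: Gn_def)
    ultimately show ?thesis using u v neq adj0[OF n u] adj0[OF n v]
      by (intro exI[of _ "[u, 0, v]"]) (simp add: ppath_iff)
  qed
qed

lemma dist_props:
  assumes n: "n \<ge> 3" and u: "u \<in> Gn n" and v: "v \<in> Gn n"
  shows "detour_dist n u v \<le> gm n" and "u = 0 \<Longrightarrow> detour_dist n u v \<le> gm n - 1"
    and "\<And>p. ppath n u v p \<Longrightarrow> length p - 1 \<le> detour_dist n u v"
proof -
  let ?S = "{length p - 1 | p. ppath n u v p}"
  have fin: "finite ?S"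
    by (rule finite_subset[of _ "{..gm n}"]) (auto dest: path_bound(1)[OF n])
  have ne: "?S \<noteq> {}" using path_exists[OF n u v] by auto
  show "detour_dist n u v \<le> gm n" unfolding detour_dist_def
    using fin ne by (subst Max_le_iff) (auto dest: path_bound(1)[OF n])
  show "detour_dist n u v \<le> gm n - 1" if "u = 0" unfolding detour_dist_def
    using fin ne that by (subst Max_le_iff) (auto dest: path_bound(2)[OF n])
  show "length p - 1 \<le> detour_dist n u v" if "ppath n u v p" for p
    unfolding detour_dist_def using fin that by (intro Max_ge) auto
qed

lemma finG: "finite (Gn n)" by (simp add: Gn_def Pn_def Hn_def)

lemma ecc_props:
  assumes n: "n \<ge> 3" and u: "u \<in> Gn n"
  shows "detour_ecc n u \<le> gm n" and "u = 0 \<Longrightarrow> detour_ecc n u \<le> gm n - 1"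
    and "\<And>v p. ppath n u v p \<Longrightarrow> length p - 1 \<le> detour_ecc n u"
proof -
  have ne: "Gn n \<noteq> {}" using u by auto
  show "detour_ecc n u \<le> gm n" unfolding detour_ecc_def
    using finG ne by (subst Max_le_iff) (auto intro: dist_props(1)[OF n u])
  show "detour_ecc n u \<le> gm n - 1" if "u = 0"
  proof -
    have h: "\<forall>v\<in>Gn n. detour_dist n u v \<le> gm n - 1" using dist_props(2)[OF n u _ that] by blast
    show ?thesis unfolding detour_ecc_def
      using finG[of n] ne h by (subst Max_le_iff) auto
  qed
  show "length p - 1 \<le> detour_ecc n u" if p: "ppath n u v p" for v p
  proof -
    have v: "v \<in> Gn n" using p by (auto simp: ppath_def)
    have "length p - 1 \<le> detour_dist n u v" using dist_props(3)[OF n u v p] .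
    also have "\<dots> \<le> detour_ecc n u" unfolding detour_ecc_def using finG v by (intro Max_ge) auto
    finally show ?thesis .
  qed
qed

lemma setP: "set [0..<gm n] = Pn n" by (simp add: Pn_def)

lemma mH: "n \<ge> 3 \<Longrightarrow> gm n \<in> Hn n" using gm_pos[of n] by (simp add: Hn_def two_pow_n)

lemma P_sub_G: "Pn n \<subseteq> Gn n" and H_sub_G: "Hn n \<subseteq> Gn n" by (auto simp: Gn_def)

lemma PG': "{0..<gm n} \<subseteq> Gn n" by (auto simp: Gn_def Pn_def)

lemma su: "n \<ge> 3 \<Longrightarrow> successively (padj n) [0..<gm n]"
  by (rule succ_P) (auto simp: Pn_def)

lemma ecc_0: "n \<ge> 3 \<Longrightarrow> detour_ecc n 0 = gm n - 1"
proof -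
  assume n: "n \<ge> 3"
  have z: "0 \<in> Gn n" using zero_P[OF n] P_sub_G by auto
  have "ppath n 0 (gm n - 1) [0..<gm n]"
    using gm_pos[OF n] su[OF n] PG'
    by (simp add: ppath_iff setP hd_upt last_upt)
  then have "gm n - 1 \<le> detour_ecc n 0" using ecc_props(3)[OF n z] by fastforce
  then show ?thesis using ecc_props(2)[OF n z] by simp
qed

lemma ecc_H: "n \<ge> 3 \<Longrightarrow> h \<in> Hn n \<Longrightarrow> detour_ecc n h = gm n"
proof -
  assume n: "n \<ge> 3" and h: "h \<in> Hn n"
  have hG: "h \<in> Gn n" using h H_sub_G by auto
  have hn0: "h \<noteq> 0" using h PH_disj zero_P[OF n] by metis
  have hnot: "h \<notin> set [0..<gm n]" using PH_disj[OF h] setP by metis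
  have "ppath n h (gm n - 1) (h # [0..<gm n])"
    using gm_pos[OF n] su[OF n] PG' hG hnot adj0[OF n hG hn0]
    by (simp add: ppath_iff setP hd_upt last_upt successively_Cons)
  then have "gm n \<le> detour_ecc n h" using ecc_props(3)[OF n hG] by fastforce
  then show ?thesis using ecc_props(1)[OF n hG] by simp
qed

lemma ecc_P: "n \<ge> 3 \<Longrightarrow> u \<in> Pn n \<Longrightarrow> u \<noteq> 0 \<Longrightarrow> detour_ecc n u = gm n"
proof -
  assume n: "n \<ge> 3" and u: "u \<in> Pn n" and u0: "u \<noteq> 0"
  have uG: "u \<in> Gn n" using u P_sub_G by auto
  define r where "r = u # filter (\<lambda>x. x \<noteq> u \<and> x \<noteq> 0) [0..<gm n] @ [0]"
  have setr: "set r = Pn n" using u zero_P[OF n] by (auto simp: r_def Pn_def)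
  have dr: "distinct r" using u0 by (auto simp: r_def)
  have lr: "length r = gm n" using distinct_card[OF dr] setr by (simp add: Pn_def)
  have sr: "successively (padj n) r" using succ_P[OF n dr] setr by simp
  have mG: "gm n \<in> Gn n" using mH[OF n] H_sub_G by auto
  have "gm n \<noteq> 0" using gm_pos[OF n] by simp
  then have a0: "padj n 0 (gm n)" using adj0[OF n mG] by simp
  have mr: "gm n \<notin> set r" using setr by (simp add: Pn_def)
  have "ppath n u (gm n) (r @ [gm n])"
    using sr dr mr a0 setr P_sub_G mG
    by (simp add: ppath_iff successively_append_iff) (simp add: r_def)
  then have "gm n \<le> detour_ecc n u" using ecc_props(3)[OF n uG] lr by fastforce
  then show ?thesis using ecc_props(1)[OF n uG] by simp
qed

theorem mainTheorem10:
  fixes n :: nat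
  assumes "n \<ge> 3"
  shows "(\<forall>u \<in> Pn n - {0}. detour_ecc n u = 2 ^ (n - 1))
       \<and> detour_ecc n 0 = 2 ^ (n - 1) - 1
       \<and> (\<forall>u \<in> Hn n. detour_ecc n u = 2 ^ (n - 1))
       \<and> detour_rad n = 2 ^ (n - 1) - 1
       \<and> detour_dia n = 2 ^ (n - 1)"
proof -
  note n = assms
  have all: "detour_ecc n u \<in> {gm n - 1, gm n}" if "u \<in> Gn n" for u
    using that ecc_0[OF n] ecc_H[OF n] ecc_P[OF n] by (auto simp: Gn_def)
  have z: "0 \<in> Gn n" using zero_P[OF n] P_sub_G by auto
  have mG: "gm n \<in> Gn n" using mH[OF n] H_sub_G by auto
  have fin: "finite ((\<lambda>u. detour_ecc n u) ` Gn n)" using finG by simp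
  have rad: "detour_rad n = gm n - 1" unfolding detour_rad_def
    by (rule Min_eqI[OF fin]) (use all ecc_0[OF n] z in \<open>force+\<close>)
  have dia: "detour_dia n = gm n" unfolding detour_dia_def
    by (rule Max_eqI[OF fin]) (use all ecc_H[OF n mH[OF n]] mG in \<open>force+\<close>)
  show ?thesis using ecc_0[OF n] ecc_H[OF n] ecc_P[OF n] rad dia by (auto simp: gm_def)
qed

end
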